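(* For all integers $k\ge 2$, $\ell\ge 3$ and $r\ge 2$, \[ R(P_\ell^{(k)};r)\le (k-1)\ell r . \]
   Context: A $k$-uniform hypergraph ($k$-graph) is a pair (vertex set, set of $k$-element subsets called edges). For integers $k\ge 2$ and $\ell\ge 0$, the loose path $P_\ell^{(k)}$ is the $k$-graph with vertex set $\{v_1,\dots,v_{(k-1)\ell+1}\}$ and edges $e_i=\{v_{(i-1)(k-1)+q}:1\le q\le k\}$, $i=1,\dots,\ell$; so consecutive edges share exactly one vertex and non-consecutive edges are disjoint ($P_0^{(k)}$ is a single vertex, $P_1^{(k)}$ a single edge, and $P_\ell^{(2)}$ is the graph path with $\ell$ edges). $K_n^{(k)}$ denotes the complete $k$-graph on $n$ vertices. For a $k$-graph $H$ and integer $r\ge 2$, the multicolor Ramsey number $R(H;r)$ is the minimum $n$ such that every coloring of the edges of $K_n^{(k)}$ with $r$ colors contains a monochromatic copy of $H$. *)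

theory Defs
  imports Main
begin

text \<open>Edges of the loose path P_l^(k) on vertex set {0..<(k-1)*l+1}
  (0-indexed version of v_1..v_{(k-1)l+1}); edge i (i<l) is
  {(k-1)*i + q | q < k}.\<close>
definition loose_path_edges :: "nat \<Rightarrow> nat \<Rightarrow> nat set set" where
  "loose_path_edges k l = {{(k-1)*i + q | q. q < k} | i. i < l}"

definition loose_path_verts :: "nat \<Rightarrow> nat \<Rightarrow> nat set" where
  "loose_path_verts k l = {0..<(k-1)*l+1}"

definition has_mono_loose_path ::
  "nat \<Rightarrow> nat \<Rightarrow> nat \<Rightarrow> (nat set \<Rightarrow> nat) \<Rightarrow> bool" where
  "has_mono_loose_path k l n col \<longleftrightarrow>
     (\<exists>f c. inj_on f (loose_path_verts k l) \<and> f ` loose_path_verts k l \<subseteq> {0..<n} \<and>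
        (\<forall>e\<in>loose_path_edges k l. col (f ` e) = c))"

definition loose_path_arrows :: "nat \<Rightarrow> nat \<Rightarrow> nat \<Rightarrow> nat \<Rightarrow> bool" where
  "loose_path_arrows k l r n \<longleftrightarrow>
     (\<forall>col. (\<forall>e. e \<subseteq> {0..<n} \<and> card e = k \<longrightarrow> col e < r) \<longrightarrow>
        has_mono_loose_path k l n col)"

definition ramsey_loose_path :: "nat \<Rightarrow> nat \<Rightarrow> nat \<Rightarrow> nat" where
  "ramsey_loose_path k l r = (LEAST n. loose_path_arrows k l r n)"

end

theory Submission
  imports Defs
begin

definition gp :: "nat set set \<Rightarrow> nat list \<Rightarrow> bool" where
  "gp E xs \<longleftrightarrow> distinct xs \<and> successively (\<lambda>x y. {x,y} \<in> E) xs"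

lemma long_path:
  assumes fin: "finite V" and E2: "E \<subseteq> {e. e \<subseteq> V \<and> card e = 2}"
    and big: "l + 1 \<le> card V"
    and deg: "\<forall>v\<in>V. l \<le> 2 * card {u\<in>V. {v,u} \<in> E}"
    and conn: "\<forall>C. C \<subseteq> V \<and> C \<noteq> {} \<and> C \<noteq> V \<longrightarrow> (\<exists>e\<in>E. \<not> e \<subseteq> C \<and> \<not> e \<subseteq> V - C)"
    and l1: "1 \<le> l"
  shows "\<exists>xs. gp E xs \<and> set xs \<subseteq> V \<and> l < length xs"
proof (rule ccontr)
  assume H: "\<not> ?thesis"
  define P where "P n \<longleftrightarrow> (\<exists>xs. gp E xs \<and> set xs \<subseteq> V \<and> length xs = n)" for n
  have Vne: "V \<noteq> {}" using big by auto
  then obtain v where "v \<in> V" by auto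
  hence "P 1" unfolding P_def by (intro exI[of _ "[v]"]) (auto simp: gp_def)
  moreover have "\<forall>y. P y \<longrightarrow> y \<le> l" using H unfolding P_def by auto
  ultimately have "\<exists>n. P n \<and> (\<forall>y. P y \<longrightarrow> y \<le> n)"
    by (rule Nat.ex_has_greatest_nat)
  then obtain n where "P n" and nmax: "\<forall>y. P y \<longrightarrow> y \<le> n" by blast
  then obtain xs where xs: "gp E xs" "set xs \<subseteq> V" "length xs = n" unfolding P_def by auto
  have nl: "n \<le> l" using H xs by force
  have n1: "n \<ge> 1" using nmax \<open>P 1\<close> by auto
  hence xsne: "xs \<noteq> []" using xs by auto
  have dist: "distinct xs" and succ: "successively (\<lambda>x y. {x,y} \<in> E) xs" using xs gp_def by auto
  have edge: "x \<noteq> y" "x \<in> V" "y \<in> V" if "{x,y} \<in> E" for x y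
    using that E2 by (auto simp: card_2_iff doubleton_eq_iff) 
  have symE: "{x,y} \<in> E \<longleftrightarrow> {y,x} \<in> E" for x y by (simp add: insert_commute)
  have clA: "u \<in> set xs" if "{hd xs, u} \<in> E" for u
  proof (rule ccontr)
    assume "u \<notin> set xs"
    hence "gp E (u # xs)" using xs xsne that by (auto simp: gp_def successively_Cons symE)
    moreover have "set (u#xs) \<subseteq> V" using xs edge that by auto
    ultimately have "P (Suc n)" unfolding P_def using xs by (intro exI[of _ "u#xs"]) auto
    thus False using nmax by force
  qed
  have clB: "u \<in> set xs" if "{last xs, u} \<in> E" for u
  proof (rule ccontr)
    assume "u \<notin> set xs"
    hence "gp E (xs @ [u])" using xs xsne that by (auto simp: gp_def successively_append_iff)
    moreover have "set (xs @ [u]) \<subseteq> V" using xs edge that by auto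
    ultimately have "P (Suc n)" unfolding P_def using xs by (intro exI[of _ "xs @ [u]"]) auto
    thus False using nmax by force
  qed
  define m where "m = n - 1"
  have nm: "n = Suc m" using n1 m_def by auto
  have hd0: "hd xs = xs ! 0" using xsne by (simp add: hd_conv_nth)
  have lastm: "last xs = xs ! m" using xsne xs nm by (simp add: last_conv_nth)
  define I where "I = {i. i < m \<and> {xs!0, xs!Suc i} \<in> E}"
  define J where "J = {i. i < m \<and> {xs!i, xs!m} \<in> E}"
  have "{u\<in>V. {hd xs,u} \<in> E} \<subseteq> (\<lambda>i. xs ! Suc i) ` I"
  proof
    fix u assume u: "u \<in> {u\<in>V. {hd xs,u} \<in> E}"
    hence "u \<in> set xs" using clA by auto
    then obtain j where j: "j < n" "u = xs ! j" using xs by (auto simp: in_set_conv_nth)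
    have "{xs!0, xs!j} \<in> E" using u j hd0 by auto
    hence "xs!0 \<noteq> xs!j" using edge(1) by blast
    hence "j \<noteq> 0" by (cases j) auto
    then obtain i where "j = Suc i" using not0_implies_Suc by blast
    thus "u \<in> (\<lambda>i. xs ! Suc i) ` I" using j u hd0 nm unfolding I_def by auto
  qed
  moreover have fI: "finite I" unfolding I_def by auto
  ultimately have "card {u\<in>V. {hd xs,u} \<in> E} \<le> card I"
    by (meson card_image_le card_mono finite_imageI le_trans)
  hence cI: "l \<le> 2 * card I" using deg hd_in_set[OF xsne] xs by force
  have "{u\<in>V. {last xs,u} \<in> E} \<subseteq> (\<lambda>i. xs ! i) ` J"
  proof
    fix u assume u: "u \<in> {u\<in>V. {last xs,u} \<in> E}"
    hence "u \<in> set xs" using clB by auto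
    then obtain j where j: "j < n" "u = xs ! j" using xs by (auto simp: in_set_conv_nth)
    have "{xs!m, xs!j} \<in> E" using u j lastm by auto
    hence "xs!m \<noteq> xs!j" using edge(1) by blast
    hence "j < m" using j nm by (cases "j = m") auto
    moreover have "{xs!j, xs!m} \<in> E" using \<open>{xs!m, xs!j} \<in> E\<close> symE by blast
    ultimately show "u \<in> (\<lambda>i. xs ! i) ` J" using j unfolding J_def by auto
  qed
  moreover have fJ: "finite J" unfolding J_def by auto
  ultimately have "card {u\<in>V. {last xs,u} \<in> E} \<le> card J"
    by (meson card_image_le card_mono finite_imageI le_trans)
  hence cJ: "l \<le> 2 * card J" using deg last_in_set[OF xsne] xs by force
  have "I \<inter> J \<noteq> {}"
  proof
    assume "I \<inter> J = {}"
    hence "card (I \<union> J) = card I + card J" using fI fJ card_Un_disjoint by blast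
    moreover have "I \<union> J \<subseteq> {..<m}" unfolding I_def J_def by auto
    hence "card (I \<union> J) \<le> m" using card_mono[of "{..<m}" "I \<union> J"] by auto
    ultimately show False using cI cJ nl nm by linarith
  qed
  then obtain i where iI: "i \<in> I" and iJ: "i \<in> J" by blast
  have im: "i < m" and e1: "{xs!0, xs!Suc i} \<in> E" and e2: "{xs!i, xs!m} \<in> E"
    using iI iJ unfolding I_def J_def by auto
  define A where "A = take (Suc i) xs"
  define B where "B = drop (Suc i) xs"
  define C where "C = A @ rev B"
  have xsAB: "xs = A @ B" unfolding A_def B_def by simp
  have Ane: "A \<noteq> []" and Bne: "B \<noteq> []" using im nm xs unfolding A_def B_def by auto
  have lastA: "last A = xs ! i" using im nm xs unfolding A_def by (subst last_conv_nth) auto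
  have hdA: "hd A = xs ! 0" using Ane unfolding A_def by (simp add: hd_conv_nth)
  have hdB: "hd B = xs ! Suc i" using im nm xs unfolding B_def by (simp add: hd_conv_nth)
  have lastB: "last B = xs ! m" using Bne lastm xsAB by (metis last_append)
  have distC: "distinct C" using dist unfolding C_def xsAB by auto
  have setC: "set C = set xs" unfolding C_def xsAB by auto
  have lenC: "length C = n" unfolding C_def using xsAB xs by (metis length_append length_rev)
  have succA: "successively (\<lambda>x y. {x,y} \<in> E) A" and succB: "successively (\<lambda>x y. {x,y} \<in> E) B"
    using succ unfolding xsAB by (auto simp: successively_append_iff)
  have succrB: "successively (\<lambda>x y. {x,y} \<in> E) (rev B)"
    using succB by (simp add: insert_commute)
  have succC: "successively (\<lambda>x y. {x,y} \<in> E) C"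
    unfolding C_def using succA succrB Ane Bne lastA lastB e2
    by (auto simp: successively_append_iff hd_rev)
  have hdC: "hd C = xs!0" using Ane hdA unfolding C_def by simp
  have lastC: "last C = xs ! Suc i" using Bne hdB unfolding C_def by (simp add: last_rev)
  have closeC: "{last C, hd C} \<in> E" using e1 hdC lastC symE by auto
  have "card (set xs) = n" using dist xs distinct_card by blast
  hence "set C \<noteq> V" using setC nl big by auto
  moreover have "set C \<noteq> {}" using Ane unfolding C_def by auto
  moreover have "set C \<subseteq> V" using setC xs by simp
  ultimately have "\<exists>e\<in>E. \<not> e \<subseteq> set C \<and> \<not> e \<subseteq> V - set C"
    using conn by blast
  then obtain e where eE: "e \<in> E" and e1: "\<not> e \<subseteq> set C" and e2: "\<not> e \<subseteq> V - set C"
    by blast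
  have eV: "e \<subseteq> V" and ec: "card e = 2" using eE E2 by auto
  obtain a where a: "a \<in> e" "a \<in> set C" using e2 eV by blast
  obtain b where b: "b \<in> e" "b \<notin> set C" using e1 by blast
  have "a \<noteq> b" using a b by auto
  obtain x y where xy: "e = {x,y}" "x \<noteq> y" using ec by (auto simp: card_2_iff)
  have eab: "e = {a,b}" using xy a b \<open>a \<noteq> b\<close> by auto
  obtain p q where Cpq: "C = p @ a # q" using a split_list by metis
  define D where "D = b # a # q @ p"
  have "distinct D" using distC b Cpq unfolding D_def by auto
  moreover have "successively (\<lambda>x y. {x,y} \<in> E) D"
  proof -
    have s1: "successively (\<lambda>x y. {x,y} \<in> E) (a # q)" and s2: "successively (\<lambda>x y. {x,y} \<in> E) p"
      using succC unfolding Cpq by (auto simp: successively_append_iff)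
    have "p \<noteq> [] \<Longrightarrow> {last (a#q), hd p} \<in> E"
      using closeC unfolding Cpq by auto
    hence "successively (\<lambda>x y. {x,y} \<in> E) ((a # q) @ p)"
      using s1 s2 by (simp only: successively_append_iff) blast
    moreover have "{b,a} \<in> E" using eE eab by (simp add: insert_commute)
    ultimately show ?thesis unfolding D_def by (simp add: successively_Cons)
  qed
  moreover have "set D \<subseteq> V" using setC xs b eV unfolding D_def Cpq by auto
  ultimately have "P (length D)" unfolding P_def gp_def by blast
  moreover have "length D = Suc n" using lenC Cpq unfolding D_def by auto
  ultimately show False using nmax by force
qed

lemma gp_mono: "gp E xs \<Longrightarrow> E \<subseteq> F \<Longrightarrow> gp F xs"
  unfolding gp_def using successively_mono by (metis (mono_tags, lifting) subsetD)

lemma EG: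
  assumes "finite V" "E \<subseteq> {e. e \<subseteq> V \<and> card e = 2}" "1 \<le> l"
    "\<forall>xs. gp E xs \<and> set xs \<subseteq> V \<longrightarrow> length xs \<le> l"
  shows "2 * card E \<le> (l-1) * card V"
  using assms
proof (induction "card V" arbitrary: V E rule: less_induct)
  case less
  note fin = less.prems(1) and E2 = less.prems(2) and l1 = less.prems(3) and np = less.prems(4)
  have "E \<subseteq> Pow V" using E2 by auto
  hence finE: "finite E" using fin by (simp add: finite_subset)
  show ?case
  proof (cases "card V \<le> l")
    case True
    have "card E \<le> card {e. e \<subseteq> V \<and> card e = 2}"
      using E2 fin by (intro card_mono) auto
    also have "\<dots> = card V choose 2" using fin by (rule n_subsets)
    finally have "2 * card E \<le> 2 * (card V choose 2)" by simp
    also have "2 * (card V choose 2) = card V * (card V - 1)"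
    proof -
      have "even (card V * (card V - 1))" by (cases "card V") auto
      thus ?thesis by (simp add: choose_two)
    qed
    also have "\<dots> \<le> card V * (l - 1)" using True by (intro mult_le_mono2) auto
    finally show ?thesis by (simp add: mult.commute)
  next
    case False
    show ?thesis
    proof (cases "\<exists>v\<in>V. 2 * card {u\<in>V. {v,u} \<in> E} \<le> l - 1")
      case True
      then obtain v where v: "v \<in> V" "2 * card {u\<in>V. {v,u} \<in> E} \<le> l - 1" by blast
      define V' where "V' = V - {v}"
      define E' where "E' = {e\<in>E. v \<notin> e}"
      have cV: "card V' < card V" using v fin unfolding V'_def by (meson card_Diff1_less)
      have IH1: "2 * card E' \<le> (l-1) * card V'"
      proof (rule less.hyps[OF cV])
        show "finite V'" using fin V'_def by auto
        show "E' \<subseteq> {e. e \<subseteq> V' \<and> card e = 2}" using E2 unfolding E'_def V'_def by auto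
        show "1 \<le> l" by fact
        show "\<forall>xs. gp E' xs \<and> set xs \<subseteq> V' \<longrightarrow> length xs \<le> l"
          using np gp_mono[of E' _ E] unfolding E'_def V'_def by auto
      qed
      have "E \<subseteq> E' \<union> (\<lambda>u. {v,u}) ` {u\<in>V. {v,u} \<in> E}"
      proof
        fix e assume e: "e \<in> E"
        show "e \<in> E' \<union> (\<lambda>u. {v,u}) ` {u\<in>V. {v,u} \<in> E}"
        proof (cases "v \<in> e")
          case True
          obtain x y where xy: "e = {x,y}" "x \<noteq> y" using e E2 by (auto simp: card_2_iff)
          show ?thesis
          proof (cases "x = v")
            case True
            thus ?thesis using xy e E2 by auto
          next
            case False
            hence "y = v" using xy \<open>v \<in> e\<close> by auto
            hence "e = {v,x}" using xy by auto
            thus ?thesis using xy e E2 by auto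
          qed
        qed (auto simp: E'_def e)
      qed
      hence "card E \<le> card (E' \<union> (\<lambda>u. {v,u}) ` {u\<in>V. {v,u} \<in> E})"
        using finE fin unfolding E'_def by (intro card_mono) auto
      also have "\<dots> \<le> card E' + card ((\<lambda>u. {v,u}) ` {u\<in>V. {v,u} \<in> E})"
        by (rule card_Un_le)
      also have "\<dots> \<le> card E' + card {u\<in>V. {v,u} \<in> E}"
        using card_image_le[of "{u\<in>V. {v,u} \<in> E}" "\<lambda>u. {v,u}"] fin by auto
      finally have "card E \<le> card E' + card {u\<in>V. {v,u} \<in> E}" .
      moreover note IH1
      moreover have "card V' = card V - 1" using v fin V'_def by auto
      moreover have "card V \<ge> 1" using v fin by (metis One_nat_def Suc_leI card_gt_0_iff empty_iff)
      ultimately have "2 * card E \<le> (l-1) * (card V - 1) + (l - 1)" using v by simp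
      also have "\<dots> = (l-1) * card V" using \<open>card V \<ge> 1\<close> by (cases "card V") auto
      finally show ?thesis .
    next
      case False
      hence deg: "\<forall>v\<in>V. l \<le> 2 * card {u\<in>V. {v,u} \<in> E}" by auto
      show ?thesis
      proof (cases "\<exists>C. C \<subseteq> V \<and> C \<noteq> {} \<and> C \<noteq> V \<and> (\<forall>e\<in>E. e \<subseteq> C \<or> e \<subseteq> V - C)")
        case True
        then obtain C where C: "C \<subseteq> V" "C \<noteq> {}" "C \<noteq> V" "\<forall>e\<in>E. e \<subseteq> C \<or> e \<subseteq> V - C" by blast
        define E1 where "E1 = {e\<in>E. e \<subseteq> C}"
        define E2' where "E2' = {e\<in>E. e \<subseteq> V - C}"
        have c1: "card C < card V" using C fin by (meson psubsetI psubset_card_mono)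
        have fC: "finite C" using C fin finite_subset by blast
        have cVC: "card (V - C) = card V - card C" using C fC by (simp add: card_Diff_subset)
        have "card C > 0" using C fC by auto
        hence c2: "card (V - C) < card V" using cVC c1 by linarith
        have h1: "2 * card E1 \<le> (l-1) * card C"
        proof (rule less.hyps[OF c1])
          show "finite C" using fin C finite_subset by blast
          show "E1 \<subseteq> {e. e \<subseteq> C \<and> card e = 2}" using E2 unfolding E1_def by auto
          show "1 \<le> l" by fact
          show "\<forall>xs. gp E1 xs \<and> set xs \<subseteq> C \<longrightarrow> length xs \<le> l"
            using np gp_mono[of E1 _ E] C unfolding E1_def by auto
        qed
        have h2: "2 * card E2' \<le> (l-1) * card (V - C)"
        proof (rule less.hyps[OF c2])
          show "finite (V - C)" using fin by blast
          show "E2' \<subseteq> {e. e \<subseteq> V - C \<and> card e = 2}" using E2 unfolding E2'_def by auto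
          show "1 \<le> l" by fact
          show "\<forall>xs. gp E2' xs \<and> set xs \<subseteq> V - C \<longrightarrow> length xs \<le> l"
            using np gp_mono[of E2' _ E] unfolding E2'_def by auto
        qed
        have "E \<subseteq> E1 \<union> E2'" using C unfolding E1_def E2'_def by auto
        hence "card E \<le> card (E1 \<union> E2')"
          using finE unfolding E1_def E2'_def by (intro card_mono) auto
        also have "\<dots> \<le> card E1 + card E2'" by (rule card_Un_le)
        finally have "card E \<le> card E1 + card E2'" .
        moreover have "card V = card C + card (V - C)" using cVC c1 by linarith
        ultimately show ?thesis using h1 h2 by (simp add: add_mult_distrib2) 
      next
        case False
        hence conn: "\<forall>C. C \<subseteq> V \<and> C \<noteq> {} \<and> C \<noteq> V \<longrightarrow> (\<exists>e\<in>E. \<not> e \<subseteq> C \<and> \<not> e \<subseteq> V - C)"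
          by blast
        have "l + 1 \<le> card V" using \<open>\<not> card V \<le> l\<close> by auto
        from long_path[OF fin E2 this deg conn l1] np show ?thesis by force
      qed
    qed
  qed
qed

definition lp :: "nat \<Rightarrow> nat \<Rightarrow> nat set \<Rightarrow> (nat set \<Rightarrow> nat) \<Rightarrow> nat \<Rightarrow> (nat \<Rightarrow> nat) \<Rightarrow> (nat \<Rightarrow> nat set) \<Rightarrow> bool" where
  "lp k l X col c J I \<longleftrightarrow> inj_on J {..l} \<and> J ` {..l} \<subseteq> X \<and>
     (\<forall>i<l. I i \<subseteq> X \<and> finite (I i) \<and> card (I i) = k - 2 \<and> I i \<inter> J ` {..l} = {} \<and>
        col (insert (J i) (insert (J (Suc i)) (I i))) = c) \<and>
     (\<forall>i<l. \<forall>j<l. i \<noteq> j \<longrightarrow> I i \<inter> I j = {})"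

lemma pigeon:
  assumes "finite B" "\<forall>b\<in>B. f b < (r::nat)" "l * r \<le> card B" "1 \<le> l" "1 \<le> r"
  shows "\<exists>c<r. l \<le> card {b\<in>B. f b = c}"
proof (rule ccontr)
  assume "\<not> ?thesis"
  hence lt: "\<forall>c\<in>{..<r}. card {b\<in>B. f b = c} < l" by auto
  define U where "U = (\<Union>c\<in>{..<r}. {b\<in>B. f b = c})"
  have eq: "B = U" using assms(2) unfolding U_def by auto
  have "card U \<le> (\<Sum>c\<in>{..<r}. card {b\<in>B. f b = c})"
    unfolding U_def by (rule card_UN_le) simp
  hence "card B \<le> (\<Sum>c\<in>{..<r}. card {b\<in>B. f b = c})" using eq by simp
  also have "\<dots> < card {..<r} * l"
    using sum_bounded_above_strict[of "{..<r}" "\<lambda>c. card {b\<in>B. f b = c}" l] lt assms(5) by simp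
  finally have "card B < l * r" by (simp add: mult.commute)
  thus False using assms(3) by linarith
qed

lemma inj_choice:
  "\<forall>i<m. finite (F i) \<and> m \<le> card (F i) \<Longrightarrow> \<exists>b. inj_on b {..<m} \<and> (\<forall>i<m. b i \<in> F i)"
proof (induction m)
  case 0
  then show ?case by auto
next
  case (Suc m)
  have "\<forall>i<m. finite (F i) \<and> m \<le> card (F i)"
  proof (intro allI impI)
    fix i assume "i < m"
    hence "i < Suc m" by simp
    thus "finite (F i) \<and> m \<le> card (F i)" using Suc.prems by fastforce
  qed
  from Suc.IH[OF this] obtain b where b: "inj_on b {..<m}" "\<forall>i<m. b i \<in> F i" by blast
  have "card (b ` {..<m}) \<le> m" using card_image_le[of "{..<m}" b] by simp
  moreover have "Suc m \<le> card (F m)" and fm: "finite (F m)" using Suc.prems by auto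
  ultimately have lt: "card (b ` {..<m}) < card (F m)" by linarith
  have "\<not> F m \<subseteq> b ` {..<m}"
  proof
    assume "F m \<subseteq> b ` {..<m}"
    hence "card (F m) \<le> card (b ` {..<m})" by (intro card_mono) auto
    thus False using lt by linarith
  qed
  then obtain x where x: "x \<in> F m" "x \<notin> b ` {..<m}" by blast
  define b' where "b' = b(m := x)"
  have "inj_on b' {..<m}" using b(1) unfolding b'_def inj_on_def by auto
  moreover have "b' m \<notin> b' ` {..<m}" using x unfolding b'_def by auto
  ultimately have "inj_on b' {..<Suc m}" unfolding lessThan_Suc by auto
  moreover have "\<forall>i<Suc m. b' i \<in> F i" using b x unfolding b'_def by (auto simp: less_Suc_eq)
  ultimately show ?case by blast
qed

lemma base:
  assumes fin: "finite X" and card: "l * r \<le> card X" and l1: "1 \<le> l" and r2: "2 \<le> r"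
    and col: "\<forall>e. e \<subseteq> X \<and> card e = 2 \<longrightarrow> col e < r"
  shows "\<exists>c J I. lp 2 l X col c J I"
proof -
  define E where "E c = {e. e \<subseteq> X \<and> card e = 2 \<and> col e = c}" for c
  have "\<exists>c<r. \<exists>xs. gp (E c) xs \<and> set xs \<subseteq> X \<and> l < length xs"
  proof (rule ccontr)
    assume NP: "\<not> (\<exists>c<r. \<exists>xs. gp (E c) xs \<and> set xs \<subseteq> X \<and> l < length xs)"
    have "2 * card (E c) \<le> (l-1) * card X" if "c < r" for c
    proof (rule EG[OF fin _ l1])
      show "E c \<subseteq> {e. e \<subseteq> X \<and> card e = 2}" unfolding E_def by auto
      show "\<forall>xs. gp (E c) xs \<and> set xs \<subseteq> X \<longrightarrow> length xs \<le> l" using NP that not_less by blast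
    qed
    hence "\<forall>c<r. 2 * card (E c) \<le> (l-1) * card X" by blast
    have "{e. e \<subseteq> X \<and> card e = 2} = (\<Union>c\<in>{..<r}. E c)" using col unfolding E_def by auto
    moreover have "card (\<Union>c\<in>{..<r}. E c) \<le> (\<Sum>c\<in>{..<r}. card (E c))"
      by (rule card_UN_le) simp
    ultimately have "card {e. e \<subseteq> X \<and> card e = 2} \<le> (\<Sum>c\<in>{..<r}. card (E c))"
      by simp
    hence "2 * card {e. e \<subseteq> X \<and> card e = 2} \<le> (\<Sum>c\<in>{..<r}. 2 * card (E c))"
      unfolding sum_distrib_left[symmetric] by simp
    also have "\<dots> \<le> card {..<r} * ((l-1) * card X)"
      using sum_bounded_above[of "{..<r}" "\<lambda>c. 2 * card (E c)" "(l-1) * card X"]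
        \<open>\<forall>c<r. 2 * card (E c) \<le> (l-1) * card X\<close> by simp
    finally have A: "2 * (card X choose 2) \<le> r * ((l-1) * card X)" using n_subsets[OF fin] by simp
    have "2 * (card X choose 2) = card X * (card X - 1)"
    proof -
      have "even (card X * (card X - 1))" by (cases "card X") auto
      thus ?thesis by (simp add: choose_two)
    qed
    with A have "card X * (card X - 1) \<le> card X * (r * (l - 1))" by (simp add: ac_simps)
    moreover have "card X > 0"
    proof -
      have "1 * 2 \<le> l * r" using mult_le_mono[OF l1 r2] .
      thus ?thesis using card by linarith
    qed
    ultimately have "card X - 1 \<le> r * (l - 1)" by simp
    moreover have "r * (l - 1) = r * l - r" by (simp add: diff_mult_distrib2)
    moreover have "r * l \<le> card X" using card by (simp add: mult.commute)
    moreover have "r \<le> r * l" using l1 by simp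
    ultimately show False using r2 by linarith
  qed
  then obtain c xs where c: "c < r" and xs: "gp (E c) xs" "set xs \<subseteq> X" "l < length xs" by blast
  define J where "J i = xs ! i" for i
  have "inj_on J {..l}" using xs unfolding J_def gp_def inj_on_def
    by (simp add: nth_eq_iff_index_eq)
  moreover have "J ` {..l} \<subseteq> X" using xs unfolding J_def by (auto intro!: nth_mem[THEN subsetD[OF xs(2)]])
  moreover have "\<forall>i<l. col {J i, J (Suc i)} = c"
  proof (intro allI impI)
    fix i assume "i < l"
    hence "{xs!i, xs!Suc i} \<in> E c" using xs unfolding gp_def by (auto intro: successively_nth)
    thus "col {J i, J (Suc i)} = c" unfolding E_def J_def by auto
  qed
  ultimately have "lp 2 l X col c J (\<lambda>_. {})" unfolding lp_def by auto
  thus ?thesis by blast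
qed

definition RP :: "nat \<Rightarrow> nat \<Rightarrow> nat \<Rightarrow> bool" where
  "RP k l r \<longleftrightarrow> (\<forall>X col. finite X \<and> (k-1)*l*r \<le> card X \<and> (\<forall>e. e \<subseteq> X \<and> card e = k \<longrightarrow> col e < r)
      \<longrightarrow> (\<exists>c J I. lp k l X col c J I))"

lemma step:
  assumes k2: "2 \<le> k" and l1: "1 \<le> l" and r2: "2 \<le> r" and IH: "RP k l r"
  shows "RP (Suc k) l r"
  unfolding RP_def
proof (intro allI impI, elim conjE)
  fix X :: "nat set" and col :: "nat set \<Rightarrow> nat"
  assume fin: "finite X" and cX: "(Suc k - 1) * l * r \<le> card X"
    and col: "\<forall>e. e \<subseteq> X \<and> card e = Suc k \<longrightarrow> col e < r"
  have klr: "(k-1)*l*r + l*r = k*l*r" using k2 by (cases k) (auto simp: algebra_simps)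
  hence "l * r \<le> card X" using cX by simp
  then obtain B where B: "B \<subseteq> X" "card B = l * r" "finite B" by (meson obtain_subset_with_card_n)
  define A where "A = X - B"
  have cA: "card A = card X - l * r" unfolding A_def using B by (simp add: card_Diff_subset)
  hence cA': "(k-1)*l*r \<le> card A" using cX klr by simp
  have finA: "finite A" using fin A_def by simp
  define col' where "col' S = (SOME c. c < r \<and> l \<le> card {b\<in>B. col (insert b S) = c})" for S
  have col'P: "col' S < r \<and> l \<le> card {b\<in>B. col (insert b S) = col' S}"
    if S: "S \<subseteq> A" "card S = k" for S
  proof -
    have "\<forall>b\<in>B. col (insert b S) < r"
    proof
      fix b assume b: "b \<in> B"
      have "b \<notin> S" using S b A_def by auto
      moreover have "finite S" using S k2 card.infinite by fastforce
      ultimately have "card (insert b S) = Suc k" using S by simp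
      moreover have "insert b S \<subseteq> X" using S b B A_def by auto
      ultimately show "col (insert b S) < r" using col by blast
    qed
    hence "\<exists>c<r. l \<le> card {b\<in>B. col (insert b S) = c}"
      using pigeon[of B "\<lambda>b. col (insert b S)" r l] B l1 r2 by simp
    thus ?thesis unfolding col'_def by (rule someI_ex[where P = "\<lambda>c. c < r \<and> l \<le> card {b\<in>B. col (insert b S) = c}"]) 
  qed
  have "\<forall>e. e \<subseteq> A \<and> card e = k \<longrightarrow> col' e < r" using col'P by blast
  hence "\<exists>c J I. lp k l A col' c J I"
    using IH[unfolded RP_def, rule_format, OF conjI[OF finA conjI[OF cA']]] by simp
  then obtain c J I where lpA: "lp k l A col' c J I" by blast
  define S where "S i = insert (J i) (insert (J (Suc i)) (I i))" for i
  have SP: "S i \<subseteq> A \<and> card (S i) = k \<and> col' (S i) = c" if i: "i < l" for i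
  proof -
    have "J i \<noteq> J (Suc i)" using lpA i unfolding lp_def inj_on_def by (metis Suc_leI atMost_iff less_imp_le_nat n_not_Suc_n)
    moreover have "J i \<notin> I i" "J (Suc i) \<notin> I i"
    proof -
      have d: "I i \<inter> J ` {..l} = {}" using lpA i unfolding lp_def by auto
      have "J i \<in> J ` {..l}" "J (Suc i) \<in> J ` {..l}" using i by auto
      thus "J i \<notin> I i" "J (Suc i) \<notin> I i" using d by blast+
    qed
    moreover have "finite (I i)" "card (I i) = k - 2" using lpA i unfolding lp_def by auto
    ultimately have "card (S i) = k" unfolding S_def using k2 by simp
    moreover have "S i \<subseteq> A" using lpA i unfolding lp_def S_def by auto
    moreover have "col' (S i) = c" using lpA i unfolding lp_def S_def by auto
    ultimately show ?thesis by blast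
  qed
  define F where "F i = {b\<in>B. col (insert b (S i)) = c}" for i
  have "\<forall>i<l. finite (F i) \<and> l \<le> card (F i)"
    using SP col'P B unfolding F_def by fastforce
  then obtain b where b: "inj_on b {..<l}" "\<forall>i<l. b i \<in> F i" using inj_choice by blast
  define I' where "I' i = insert (b i) (I i)" for i
  have bB: "b i \<in> B" "b i \<notin> A" if "i < l" for i using b that unfolding F_def A_def by auto
  have IA: "I i \<subseteq> A" if "i < l" for i using lpA that unfolding lp_def by auto
  have JA: "J ` {..l} \<subseteq> A" using lpA unfolding lp_def by auto
  have "lp (Suc k) l X col c J I'"
    unfolding lp_def
  proof (intro conjI allI impI)
    show "inj_on J {..l}" using lpA unfolding lp_def by auto
    show "J ` {..l} \<subseteq> X" using JA A_def by auto
    fix i assume i: "i < l"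
    show "I' i \<subseteq> X" using IA[OF i] bB[OF i] B A_def unfolding I'_def by auto
    show "finite (I' i)" using lpA i unfolding lp_def I'_def by auto
    show "card (I' i) = Suc k - 2" using lpA i bB[OF i] IA[OF i] k2 unfolding lp_def I'_def
      by (metis Suc_diff_le card_insert_disjoint subsetD Suc_diff_Suc diff_Suc_1 numeral_2_eq_2)
    show "I' i \<inter> J ` {..l} = {}" using lpA i bB[OF i] JA unfolding lp_def I'_def by auto
    have "col (insert (b i) (S i)) = c" using b i unfolding F_def by auto
    thus "col (insert (J i) (insert (J (Suc i)) (I' i))) = c" unfolding S_def I'_def
      by (simp add: insert_commute)
  next
    fix i j assume i: "i < l" and j: "j < l" and ij: "i \<noteq> j"
    have "b i \<noteq> b j" using b(1) i j ij unfolding inj_on_def by auto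
    moreover have "I i \<inter> I j = {}" using lpA i j ij unfolding lp_def by auto
    ultimately show "I' i \<inter> I' j = {}" using bB[OF i] bB[OF j] IA[OF i] IA[OF j] unfolding I'_def by auto
  qed
  thus "\<exists>c J I. lp (Suc k) l X col c J I" by blast
qed

lemma main:
  assumes "2 \<le> k" and l1: "1 \<le> l" and r2: "2 \<le> r"
  shows "RP k l r"
  using assms(1)
proof (induction k rule: nat_induct_at_least)
  case base
  show ?case unfolding RP_def
  proof (intro allI impI, elim conjE)
    fix X :: "nat set" and col :: "nat set \<Rightarrow> nat"
    assume "finite X" "(2 - 1) * l * r \<le> card X" "\<forall>e. e \<subseteq> X \<and> card e = 2 \<longrightarrow> col e < r"
    thus "\<exists>c J I. lp 2 l X col c J I" using Submission.base[of X l r col] l1 r2 by simp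
  qed
next
  case (Suc n)
  thus ?case using step l1 r2 by blast
qed

lemma conv:
  assumes k2: "2 \<le> k" and lpX: "lp k l {0..<n} col c J I"
  shows "has_mono_loose_path k l n col"
proof -
  define d where "d = k - 1"
  have d1: "1 \<le> d" and kd: "k = Suc d" and k2d: "k - 2 = d - 1" using k2 unfolding d_def by auto
  have injJ: "inj_on J {..l}" and JX: "J ` {..l} \<subseteq> {0..<n}" using lpX unfolding lp_def by auto
  have IP: "I i \<subseteq> {0..<n} \<and> finite (I i) \<and> card (I i) = k - 2 \<and> I i \<inter> J ` {..l} = {}" if "i < l" for i
    using lpX that unfolding lp_def by auto
  have colP: "col (insert (J i) (insert (J (Suc i)) (I i))) = c" if "i < l" for i
    using lpX that unfolding lp_def by auto
  have disj: "I i \<inter> I j = {}" if "i < l" "j < l" "i \<noteq> j" for i j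
    using lpX that unfolding lp_def by auto
  have "\<forall>i. \<exists>h. i < l \<longrightarrow> bij_betw h {0..<k-2} (I i)"
  proof
    fix i
    show "\<exists>h. i < l \<longrightarrow> bij_betw h {0..<k-2} (I i)"
    proof (cases "i < l")
      case True
      then obtain h where "bij_betw h {0..<card (I i)} (I i)" using IP ex_bij_betw_nat_finite by blast
      thus ?thesis using IP[OF True] by auto
    qed auto
  qed
  from choice[OF this] obtain e where e: "\<And>i. i < l \<Longrightarrow> bij_betw (e i) {0..<k-2} (I i)" by blast
  have eI: "e i t \<in> I i" if "i < l" "t < k - 2" for i t
    using e[OF that(1)] that(2) bij_betwE by fastforce
  define f where "f j = (if j mod d = 0 then J (j div d) else e (j div d) (j mod d - 1))" for j
  have F1: "f (d * i) = J i" for i using d1 unfolding f_def by simp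
  have F2: "f (d * i + q) = e i (q - 1)" if "0 < q" "q < d" for i q
    using that unfolding f_def by simp
  have jdec: "j = d * (j div d) + j mod d" for j by simp
  have modlt: "j mod d < d" for j using d1 by simp
  have divle: "j div d \<le> l" if "j < d * l + 1" for j
  proof -
    have "j \<le> d * l" using that by simp
    hence "j div d \<le> (d * l) div d" by (rule div_le_mono)
    thus ?thesis using d1 by simp
  qed
  have divlt: "j div d < l" if "j < d * l + 1" "j mod d \<noteq> 0" for j
  proof (rule ccontr)
    assume "\<not> j div d < l"
    hence "d * l \<le> d * (j div d)" by simp
    hence "d * l + 1 \<le> j" using jdec[of j] that(2) by linarith
    thus False using that(1) by simp
  qed
  define Vs where "Vs = {0..<d * l + 1}"
  have verts: "loose_path_verts k l = Vs" unfolding loose_path_verts_def Vs_def d_def by simp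
  have fval: "f j \<in> J ` {..l} \<and> j mod d = 0 \<or> (f j \<in> I (j div d) \<and> j div d < l \<and> j mod d \<noteq> 0)"
    if "j \<in> Vs" for j
  proof (cases "j mod d = 0")
    case True
    thus ?thesis using divle[of j] that unfolding f_def Vs_def by auto
  next
    case False
    have "j mod d - 1 < k - 2" using modlt[of j] k2d False by linarith
    thus ?thesis using False divlt[of j] that eI unfolding f_def Vs_def by auto
  qed
  have "inj_on f Vs"
  proof (rule inj_onI)
    fix j1 j2 assume j1: "j1 \<in> Vs" and j2: "j2 \<in> Vs" and eq: "f j1 = f j2"
    show "j1 = j2"
    proof (cases "j1 mod d = 0")
      case T1: True
      show ?thesis
      proof (cases "j2 mod d = 0")
        case True
        have "J (j1 div d) = J (j2 div d)" using eq T1 True unfolding f_def by simp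
        moreover have "j1 div d \<in> {..l}" "j2 div d \<in> {..l}" using divle j1 j2 unfolding Vs_def by auto
        ultimately have "j1 div d = j2 div d" using injJ unfolding inj_on_def by blast
        thus ?thesis using jdec[of j1] jdec[of j2] T1 True by simp
      next
        case False
        have "f j2 \<in> I (j2 div d)" "j2 div d < l" using fval[OF j2] False by auto
        moreover have "f j1 \<in> J ` {..l}" using fval[OF j1] T1 by auto
        moreover have "I (j2 div d) \<inter> J ` {..l} = {}" using IP[OF \<open>j2 div d < l\<close>] by blast
        ultimately show ?thesis using eq by auto
      qed
    next
      case F1: False
      show ?thesis
      proof (cases "j2 mod d = 0")
        case True
        have "f j1 \<in> I (j1 div d)" "j1 div d < l" using fval[OF j1] F1 by auto
        moreover have "f j2 \<in> J ` {..l}" using fval[OF j2] True by auto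
        moreover have "I (j1 div d) \<inter> J ` {..l} = {}" using IP[OF \<open>j1 div d < l\<close>] by blast
        ultimately show ?thesis using eq by auto
      next
        case False
        have a1: "f j1 \<in> I (j1 div d)" "j1 div d < l" using fval[OF j1] F1 by auto
        have a2: "f j2 \<in> I (j2 div d)" "j2 div d < l" using fval[OF j2] False by auto
        have ii: "j1 div d = j2 div d"
        proof (rule ccontr)
          assume "j1 div d \<noteq> j2 div d"
          hence "I (j1 div d) \<inter> I (j2 div d) = {}" using disj a1(2) a2(2) by blast
          thus False using a1(1) a2(1) eq by auto
        qed
        have "e (j1 div d) (j1 mod d - 1) = e (j1 div d) (j2 mod d - 1)"
          using eq F1 False ii unfolding f_def by simp
        moreover have "j1 mod d - 1 < k - 2" "j2 mod d - 1 < k - 2"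
          using modlt[of j1] modlt[of j2] k2d F1 False by linarith+
        ultimately have "j1 mod d - 1 = j2 mod d - 1"
          using e[OF a1(2)] unfolding bij_betw_def inj_on_def by auto
        hence "j1 mod d = j2 mod d" using F1 False by linarith
        thus ?thesis using jdec[of j1] jdec[of j2] ii by simp
      qed
    qed
  qed
  moreover have "f ` Vs \<subseteq> {0..<n}"
  proof
    fix x assume "x \<in> f ` Vs"
    then obtain j where j: "j \<in> Vs" "x = f j" by blast
    show "x \<in> {0..<n}" using fval[OF j(1)] JX IP j(2) by blast
  qed
  moreover have "\<forall>E\<in>loose_path_edges k l. col (f ` E) = c"
  proof
    fix E assume "E \<in> loose_path_edges k l"
    then obtain i where i: "i < l" and Edef: "E = {d * i + q | q. q < k}"
      unfolding loose_path_edges_def d_def by blast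
    have "f ` E = insert (J i) (insert (J (Suc i)) (I i))"
    proof
      show "f ` E \<subseteq> insert (J i) (insert (J (Suc i)) (I i))"
      proof
        fix x assume "x \<in> f ` E"
        then obtain q where q: "q < k" "x = f (d * i + q)" unfolding Edef by blast
        show "x \<in> insert (J i) (insert (J (Suc i)) (I i))"
        proof (cases "q = 0")
          case True thus ?thesis using q F1 by simp
        next
          case False
          show ?thesis
          proof (cases "q = d")
            case True
            hence "x = J (Suc i)" using q F1[of "Suc i"] by (simp add: algebra_simps)
            thus ?thesis by simp
          next
            case False
            hence "q < d" using q kd by simp
            hence "x = e i (q - 1)" using q F2 \<open>q \<noteq> 0\<close> by simp
            moreover have "q - 1 < k - 2" using \<open>q < d\<close> \<open>q \<noteq> 0\<close> k2d by linarith
            ultimately show ?thesis using eI i by simp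
          qed
        qed
      qed
    next
      show "insert (J i) (insert (J (Suc i)) (I i)) \<subseteq> f ` E"
      proof
        fix x assume x: "x \<in> insert (J i) (insert (J (Suc i)) (I i))"
        have mem: "f (d * i + q) \<in> f ` E" if "q < k" for q using that unfolding Edef by blast
        show "x \<in> f ` E"
        proof (cases "x = J i")
          case True thus ?thesis using mem[of 0] F1 kd by simp
        next
          case False
          show ?thesis
          proof (cases "x = J (Suc i)")
            case True
            have "f (d * i + d) = J (Suc i)" using F1[of "Suc i"] by (simp add: algebra_simps)
            thus ?thesis using mem[of d] kd True by simp
          next
            case False
            hence "x \<in> I i" using x \<open>x \<noteq> J i\<close> by simp
            hence "x \<in> e i ` {0..<k-2}" using e[OF i] unfolding bij_betw_def by simp
            then obtain t where t: "t < k - 2" "x = e i t" by auto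
            have "Suc t < d" using t k2d by linarith
            hence "f (d * i + Suc t) = x" using F2[of "Suc t" i] t by simp
            thus ?thesis using mem[of "Suc t"] \<open>Suc t < d\<close> kd by simp
          qed
        qed
      qed
    qed
    thus "col (f ` E) = c" using colP[OF i] by simp
  qed
  ultimately show ?thesis unfolding has_mono_loose_path_def verts by blast
qed

theorem theorem1:
  fixes k l r :: nat
  assumes "k \<ge> 2" and "l \<ge> 3" and "r \<ge> 2"
  shows "loose_path_arrows k l r ((k-1)*l*r) \<and> ramsey_loose_path k l r \<le> (k-1)*l*r"
proof -
  have RP: "RP k l r" using main assms by simp
  have A: "loose_path_arrows k l r ((k-1)*l*r)"
    unfolding loose_path_arrows_def
  proof (intro allI impI)
    fix col :: "nat set \<Rightarrow> nat"
    assume "\<forall>e. e \<subseteq> {0..<(k-1)*l*r} \<and> card e = k \<longrightarrow> col e < r"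
    hence "\<exists>c J I. lp k l {0..<(k-1)*l*r} col c J I"
      using RP[unfolded RP_def, rule_format, of "{0..<(k-1)*l*r}" col] by simp
    thus "has_mono_loose_path k l ((k-1)*l*r) col" using conv assms(1) by blast
  qed
  moreover have "ramsey_loose_path k l r \<le> (k-1)*l*r"
    unfolding ramsey_loose_path_def using A by (rule Least_le)
  ultimately show ?thesis by blast
qed
end
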